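(* Let $\Sigma$ be a finite alphabet and $\$\notin\Sigma$. If $L_1,\dots,L_n\subseteq\Sigma^*$ are languages each definable by a regulated $\mathsf{C\text{-}RASP}$ formula over $\Sigma$, then the language $L_1\$L_2\$\cdots\$L_n\subseteq(\Sigma\cup\{\$\})^*$ is definable by a $\mathsf{C\text{-}RASP}$ formula.
   Context: $\mathsf{C\text{-}RASP}$ formulas over a finite alphabet $\Sigma$: $\phi ::= \sigma \mid \Diamond^{-}\phi \mid \Box^{-}\phi \mid \neg\phi \mid \phi_1\wedge\phi_2 \mid \sum_{t\in\mathcal{T}}\alpha_t t\sim k$, terms $t ::= \#[\phi] \mid c$, with $\sigma\in\Sigma$, $\alpha_t,k,c\in\mathbb{Z}$, ${\sim}\in\{<,\le,=,\ge,>\}$. Semantics at position $i$ of $w=w_1\cdots w_n$: $w,i\models\sigma$ iff $w_i=\sigma$; Boolean connectives as usual; $w,i\models\Diamond^{-}\phi$ iff $w,j\models\phi$ for some $j<i$; $w,i\models\Box^{-}\phi$ iff $w,j\models\phi$ for all $j\le i$; $\#[\phi]$ evaluates to $|\{j\in[1,i]: w,j\models\phi\}|$, $c$ to $c$, comparisons are integer comparisons. $w\models\phi$ iff $w,|w|\models\phi$, and $\phi$ defines $L(\phi)=\{w: w\models\phi\}$. A formula is regulated if no atomic formula $\sigma$ occurs outside the scope of a counting operator $\#$. *)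

theory Defs
  imports Main
begin

datatype cmpop = Lt | Le | Eq | Ge | Gt

datatype 'a crasp =
    Sym 'a
  | Dia "'a crasp"
  | Box "'a crasp"
  | Neg "'a crasp"
  | Conj "'a crasp" "'a crasp"
  | Cmp "(int \<times> 'a cterm) list" cmpop int
and 'a cterm =
    Count "'a crasp"
  | Const int

fun cmp_sem :: "cmpop \<Rightarrow> int \<Rightarrow> int \<Rightarrow> bool" where
  "cmp_sem Lt x y = (x < y)"
| "cmp_sem Le x y = (x \<le> y)"
| "cmp_sem Eq x y = (x = y)"
| "cmp_sem Ge x y = (x \<ge> y)"
| "cmp_sem Gt x y = (x > y)"

text \<open>Positions are 1-based: position i of w refers to w ! (i - 1), for 1 \<le> i \<le> length w.\<close>

fun sat :: "'a list \<Rightarrow> nat \<Rightarrow> 'a crasp \<Rightarrow> bool"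
and tval :: "'a list \<Rightarrow> nat \<Rightarrow> 'a cterm \<Rightarrow> int" where
  "sat w i (Sym s) = (1 \<le> i \<and> i \<le> length w \<and> w ! (i - 1) = s)"
| "sat w i (Dia f) = (\<exists>j. 1 \<le> j \<and> j < i \<and> sat w j f)"
| "sat w i (Box f) = (\<forall>j. 1 \<le> j \<and> j \<le> i \<longrightarrow> sat w j f)"
| "sat w i (Neg f) = (\<not> sat w i f)"
| "sat w i (Conj f g) = (sat w i f \<and> sat w i g)"
| "sat w i (Cmp ts op k) =
     cmp_sem op (sum_list (map (\<lambda>p. fst p * tval w i (snd p)) ts)) k"
| "tval w i (Count f) = int (card {j. 1 \<le> j \<and> j \<le> i \<and> sat w j f})"
| "tval w i (Const c) = c"

definition lang :: "'a crasp \<Rightarrow> 'a list set" where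
  "lang f = {w. sat w (length w) f}"

text \<open>Regulated: no atomic formula occurs outside the scope of a counting operator.
  Everything inside a comparison (i.e. inside some #[.]) is in such a scope.\<close>
fun regulated :: "'a crasp \<Rightarrow> bool" where
  "regulated (Sym s) = False"
| "regulated (Dia f) = regulated f"
| "regulated (Box f) = regulated f"
| "regulated (Neg f) = regulated f"
| "regulated (Conj f g) = (regulated f \<and> regulated g)"
| "regulated (Cmp ts op k) = True"

text \<open>The separator \$ is None; letters of \<Sigma> are Some a.
  joinsep [w1,...,wn] = w1 \$ w2 \$ ... \$ wn.\<close>
fun joinsep :: "'a list list \<Rightarrow> 'a option list" where
  "joinsep [] = []"
| "joinsep [w] = map Some w"
| "joinsep (w # ws) = map Some w @ None # joinsep ws"

definition sepconcat :: "'a list set list \<Rightarrow> 'a option list set" where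
  "sepconcat Ls = {joinsep ws | ws. length ws = length Ls \<and> (\<forall>i < length Ls. ws ! i \<in> Ls ! i)}"

end

theory Submission
  imports Defs
begin

definition Bk :: "nat \<Rightarrow> 'a option crasp" where
 "Bk k = Conj (Neg (Sym None)) (Cmp [(1, Count (Sym None))] Eq (int k))"

lemma count_sym:
  "j \<le> length w \<Longrightarrow> card {j'. 1 \<le> j' \<and> j' \<le> j \<and> sat w j' (Sym x)} = count_list (take j w) x"
proof (induction j)
  case 0
  then show ?case by simp
next
  case (Suc j)
  have eq: "{j'. 1 \<le> j' \<and> j' \<le> Suc j \<and> sat w j' (Sym x)} =
     {j'. 1 \<le> j' \<and> j' \<le> j \<and> sat w j' (Sym x)} \<union> (if w ! j = x then {Suc j} else {})"
    using Suc.prems by (auto simp: le_Suc_eq)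
  have fin: "finite {j'. 1 \<le> j' \<and> j' \<le> j \<and> sat w j' (Sym x)}" by simp
  have tk: "take (Suc j) w = take j w @ [w ! j]" using Suc.prems by (simp add: take_Suc_conv_app_nth)
  have IH: "card {j'. 1 \<le> j' \<and> j' \<le> j \<and> sat w j' (Sym x)} = count_list (take j w) x"
    using Suc by simp
  have nm: "Suc j \<notin> {j'. 1 \<le> j' \<and> j' \<le> j \<and> sat w j' (Sym x)}" by simp
  show ?case unfolding eq tk using IH fin nm by (simp del: sat.simps)
qed

lemma sat_Bk:
  "sat w j (Bk k) \<longleftrightarrow> \<not> (1 \<le> j \<and> j \<le> length w \<and> w ! (j - 1) = None) \<and>
      card {j'. 1 \<le> j' \<and> j' \<le> j \<and> sat w j' (Sym None)} = k"
  unfolding Bk_def by (simp only: sat.simps(4,5,6) tval.simps) auto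

lemma Bk_iff:
  assumes w: "w = u @ map Some b @ v" and cu: "count_list u None = k"
    and lu: "u = [] \<or> last u = None" and hv: "v = [] \<or> hd v = None"
    and j: "1 \<le> j" "j \<le> length w"
  shows "sat w j (Bk k) \<longleftrightarrow> length u < j \<and> j \<le> length u + length b"
proof -
  have S: "sat w j (Bk k) \<longleftrightarrow> w ! (j - 1) \<noteq> None \<and> count_list (take j w) None = k"
    using j by (simp only: sat_Bk count_sym) simp
  consider "j = length u" | "j < length u" | "length u < j \<and> j \<le> length u + length b"
    | "length u + length b < j" by linarith
  then show ?thesis
  proof cases
    case 1
    then have "u \<noteq> []" using j by auto
    then have "w ! (j - 1) = last u" using 1 w by (simp add: nth_append last_conv_nth)
    then show ?thesis using S lu 1 \<open>u \<noteq> []\<close> by simp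
  next
    case 2
    have tw: "take j w = take j u" using 2 w by simp
    have "u = take j u @ drop j u" by simp
    then have c: "count_list u None = count_list (take j u) None + count_list (drop j u) None"
      by (metis count_list_append)
    have "drop j u \<noteq> []" using 2 by simp
    moreover have "last (drop j u) = None" using 2 lu by auto
    ultimately have "None \<in> set (drop j u)" by (metis last_in_set)
    then have "count_list (drop j u) None \<noteq> 0" by (simp add: count_list_0_iff)
    then show ?thesis using S tw c cu 2 by auto
  next
    case 3
    have tw: "take j w = u @ map Some (take (j - length u) b)" using 3 w by (simp add: take_map)
    have a1: "\<not> j - 1 < length u" "j - 1 - length u < length b" using 3 by auto
    have "w ! (j - 1) = (map Some b @ v) ! (j - 1 - length u)" using a1 w by (simp add: nth_append)
    also have "\<dots> = Some (b ! (j - 1 - length u))" using a1 by (simp add: nth_append)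
    finally have "w ! (j - 1) = Some (b ! (j - 1 - length u))" .
    moreover have "count_list (map Some (take (j - length u) b)) None = 0"
      by (simp add: count_list_0_iff)
    ultimately show ?thesis using S tw cu 3 by simp
  next
    case 4
    have tw: "take j w = u @ map Some b @ take (j - length u - length b) v" using 4 w by simp
    have "v \<noteq> []" using 4 j w by auto
    then have "hd (take (j - length u - length b) v) = None" "take (j - length u - length b) v \<noteq> []"
      using hv 4 by auto
    then have "None \<in> set (take (j - length u - length b) v)" by (metis hd_in_set)
    then have "count_list (take (j - length u - length b) v) None \<noteq> 0" by (simp add: count_list_0_iff)
    moreover have "count_list (map Some b) None = 0" by (simp add: count_list_0_iff)
    ultimately show ?thesis using S tw cu 4 by simp
  qed
qed


primrec tr :: "nat \<Rightarrow> 'a crasp \<Rightarrow> 'a option crasp" and trt :: "nat \<Rightarrow> 'a cterm \<Rightarrow> 'a option cterm" where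
  "tr k (Sym s) = Sym (Some s)"
| "tr k (Dia f) = Neg (Conj (Neg (Conj (tr k f) (Cmp [(1, Count (Conj (tr k f) (Bk k)))] Ge 2)))
                          (Neg (Conj (Neg (tr k f)) (Cmp [(1, Count (Conj (tr k f) (Bk k)))] Ge 1))))"
| "tr k (Box f) = Cmp [(1, Count (Conj (Bk k) (Neg (tr k f))))] Eq 0"
| "tr k (Neg f) = Neg (tr k f)"
| "tr k (Conj f g) = Conj (tr k f) (tr k g)"
| "tr k (Cmp ts op c) = Cmp (map (map_prod id (trt k)) ts) op c"
| "trt k (Count f) = Count (Conj (tr k f) (Bk k))"
| "trt k (Const c) = Const c"

lemma cmp1: "sat w i (Cmp [(1,t)] op c) = cmp_sem op (tval w i t) c" by simp

lemma nth_block: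
  assumes w: "w = u @ map Some b @ v" and "length u < j" "j \<le> length u + length b"
  shows "w ! (j - 1) = Some (b ! (j - length u - 1))"
proof -
  have a1: "\<not> j - 1 < length u" "j - 1 - length u < length b" using assms by auto
  have "w ! (j - 1) = (map Some b @ v) ! (j - 1 - length u)" using a1 w by (simp add: nth_append)
  also have "\<dots> = Some (b ! (j - 1 - length u))" using a1 by (simp add: nth_append)
  finally show ?thesis by simp
qed

lemma dia_count:
  fixes m :: nat
  assumes "finite {j. 1 \<le> j \<and> j \<le> m \<and> Q j}"
  shows "(\<exists>j. 1 \<le> j \<and> j < m \<and> Q j) \<longleftrightarrow>
    ((Q m \<and> card {j. 1 \<le> j \<and> j \<le> m \<and> Q j} \<ge> 2) \<or> (\<not> Q m \<and> card {j. 1 \<le> j \<and> j \<le> m \<and> Q j} \<ge> 1))"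
proof (cases "m = 0")
  case True
  have e0: "{j. 1 \<le> j \<and> j \<le> m \<and> Q j} = {}" using True by auto
  show ?thesis unfolding e0 using True by simp
next
  case False
  let ?S = "{j. 1 \<le> j \<and> j < m \<and> Q j}"
  have fin: "finite ?S" by simp
  have e: "{j. 1 \<le> j \<and> j \<le> m \<and> Q j} = ?S \<union> (if Q m then {m} else {})"
    using False by (auto simp: le_less)
  have ne: "(\<exists>j. 1 \<le> j \<and> j < m \<and> Q j) \<longleftrightarrow> card ?S \<ge> 1"
    using fin by (auto simp: Suc_le_eq card_gt_0_iff)
  show ?thesis unfolding e ne using fin by auto
qed

context
  fixes w :: "'a option list" and u v :: "'a option list" and b :: "'a list" and k :: nat
  assumes w: "w = u @ map Some b @ v" and cu: "count_list u None = k"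
    and lu: "u = [] \<or> last u = None" and hv: "v = [] \<or> hd v = None"
begin

lemma count_block:
  assumes P: "\<forall>j. length u < j \<and> j \<le> length u + length b \<longrightarrow> (P j \<longleftrightarrow> Q (j - length u))"
    and i: "i \<le> length w"
  shows "card {j. 1 \<le> j \<and> j \<le> i \<and> P j \<and> sat w j (Bk k)} =
         card {j. 1 \<le> j \<and> j \<le> min (i - length u) (length b) \<and> Q j}"
proof -
  have "{j. 1 \<le> j \<and> j \<le> i \<and> P j \<and> sat w j (Bk k)} =
        (\<lambda>j. j + length u) ` {j. 1 \<le> j \<and> j \<le> min (i - length u) (length b) \<and> Q j}"
  proof (rule set_eqI, rule iffI)
    fix x assume "x \<in> {j. 1 \<le> j \<and> j \<le> i \<and> P j \<and> sat w j (Bk k)}"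
    then have x: "1 \<le> x" "x \<le> i" "P x" "sat w x (Bk k)" by auto
    then have b: "length u < x \<and> x \<le> length u + length b"
      using Bk_iff[OF w cu lu hv, of x] i by auto
    then have "Q (x - length u)" using P x by auto
    then show "x \<in> (\<lambda>j. j + length u) ` {j. 1 \<le> j \<and> j \<le> min (i - length u) (length b) \<and> Q j}"
      using b x by (auto intro!: image_eqI[where x="x - length u"])
  next
    fix x assume "x \<in> (\<lambda>j. j + length u) ` {j. 1 \<le> j \<and> j \<le> min (i - length u) (length b) \<and> Q j}"
    then obtain y where y: "x = y + length u" "1 \<le> y" "y \<le> min (i - length u) (length b)" "Q y" by auto
    have b: "length u < x \<and> x \<le> length u + length b" using y by auto
    have "x \<le> i" using y by auto
    moreover have "sat w x (Bk k)" using Bk_iff[OF w cu lu hv, of x] b w by auto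
    moreover have "P x" using P b y by auto
    ultimately show "x \<in> {j. 1 \<le> j \<and> j \<le> i \<and> P j \<and> sat w j (Bk k)}" using y by auto
  qed
  moreover have "inj_on (\<lambda>j. j + length u) A" for A by (auto simp: inj_on_def)
  ultimately show ?thesis by (simp add: card_image)
qed

lemma tr_correct:
  shows "\<forall>i. i \<le> length w \<and> ((length u < i \<and> i \<le> length u + length b) \<or> regulated \<phi>) \<longrightarrow>
            sat w i (tr k \<phi>) = sat b (min (i - length u) (length b)) \<phi>"
    and "\<forall>i. i \<le> length w \<longrightarrow> tval w i (trt k t) = tval b (min (i - length u) (length b)) t"
proof (induction \<phi> and t)
  case (Sym s)
  show ?case
  proof (intro allI impI)
    fix i assume a: "i \<le> length w \<and> ((length u < i \<and> i \<le> length u + length b) \<or> regulated (Sym s))"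
    then have b: "length u < i" "i \<le> length u + length b" by auto
    show "sat w i (tr k (Sym s)) = sat b (min (i - length u) (length b)) (Sym s)"
      using nth_block[OF w b] a b by auto
  qed
next
  case (Dia \<phi>)
  show ?case
  proof (intro allI impI)
    fix i assume a: "i \<le> length w \<and> ((length u < i \<and> i \<le> length u + length b) \<or> regulated (Dia \<phi>))"
    define m where "m = min (i - length u) (length b)"
    have A: "sat w i (tr k \<phi>) = sat b m \<phi>" using Dia a unfolding m_def by auto
    have blk: "\<forall>j. length u < j \<and> j \<le> length u + length b \<longrightarrow> (sat w j (tr k \<phi>) \<longleftrightarrow> sat b (j - length u) \<phi>)"
      using Dia w by auto
    have C: "tval w i (Count (Conj (tr k \<phi>) (Bk k))) = int (card {j. 1 \<le> j \<and> j \<le> m \<and> sat b j \<phi>})"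
      using count_block[OF blk] a unfolding m_def by simp
    have fin: "finite {j. 1 \<le> j \<and> j \<le> m \<and> sat b j \<phi>}" by simp
    show "sat w i (tr k (Dia \<phi>)) = sat b m (Dia \<phi>)"
      apply (simp only: tr.simps sat.simps(4,5) cmp1 C A)
      using dia_count[OF fin] by auto
  qed
next
  case (Box \<phi>)
  show ?case
  proof (intro allI impI)
    fix i assume a: "i \<le> length w \<and> ((length u < i \<and> i \<le> length u + length b) \<or> regulated (Box \<phi>))"
    define m where "m = min (i - length u) (length b)"
    have blk: "\<forall>j. length u < j \<and> j \<le> length u + length b \<longrightarrow> ((\<not> sat w j (tr k \<phi>)) \<longleftrightarrow> \<not> sat b (j - length u) \<phi>)"
      using Box w by auto
    have e: "{j. 1 \<le> j \<and> j \<le> i \<and> sat w j (Conj (Bk k) (Neg (tr k \<phi>)))} = 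
       {j. 1 \<le> j \<and> j \<le> i \<and> \<not> sat w j (tr k \<phi>) \<and> sat w j (Bk k)}" by auto
    have C: "tval w i (Count (Conj (Bk k) (Neg (tr k \<phi>)))) = int (card {j. 1 \<le> j \<and> j \<le> m \<and> \<not> sat b j \<phi>})"
      using count_block[OF blk] a unfolding m_def by (simp only: tval.simps e)
    have fin: "finite {j. 1 \<le> j \<and> j \<le> m \<and> \<not> sat b j \<phi>}" by simp
    show "sat w i (tr k (Box \<phi>)) = sat b m (Box \<phi>)"
      apply (simp only: tr.simps cmp1 C)
      using fin by auto
  qed
next
  case (Neg \<phi>)
  then show ?case by auto
next
  case (Conj \<phi>1 \<phi>2)
  then show ?case by auto
next
  case (Cmp ts op c)
  show ?case
  proof (intro allI impI)
    fix i assume a: "i \<le> length w \<and> ((length u < i \<and> i \<le> length u + length b) \<or> regulated (Cmp ts op c))"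
    have "map (\<lambda>p. fst p * tval w i (snd p)) (map (map_prod id (trt k)) ts) =
          map (\<lambda>p. fst p * tval b (min (i - length u) (length b)) (snd p)) ts"
      using Cmp a by (auto simp: map_prod_def split: prod.splits)
    then show "sat w i (tr k (Cmp ts op c)) = sat b (min (i - length u) (length b)) (Cmp ts op c)"
      by (simp only: tr.simps sat.simps(6))
  qed
next
  case (Count \<phi>)
  show ?case
  proof (intro allI impI)
    fix i assume a: "i \<le> length w"
    have blk: "\<forall>j. length u < j \<and> j \<le> length u + length b \<longrightarrow> (sat w j (tr k \<phi>) \<longleftrightarrow> sat b (j - length u) \<phi>)"
      using Count w by auto
    show "tval w i (trt k (Count \<phi>)) = tval b (min (i - length u) (length b)) (Count \<phi>)"
      using count_block[OF blk] a by simp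
  qed
next
  case (Const c)
  then show ?case by simp
qed

end


lemma joinsep_cons2: "joinsep (w # w' # ws) = map Some w @ None # joinsep (w' # ws)"
  by simp

lemma decomp:
  "ws \<noteq> [] \<Longrightarrow> k < length ws \<Longrightarrow> \<exists>u v. joinsep ws = u @ map Some (ws ! k) @ v \<and>
     count_list u None = k \<and> (u = [] \<or> last u = None) \<and> (v = [] \<or> hd v = None)"
proof (induction ws arbitrary: k)
  case Nil then show ?case by simp
next
  case (Cons w ws)
  show ?case
  proof (cases ws)
    case Nil
    then show ?thesis using Cons.prems by (intro exI[of _ "[]"]) auto
  next
    case (Cons w' ws')
    show ?thesis
    proof (cases k)
      case 0
      then show ?thesis using Cons
        by (intro exI[of _ "[]"] exI[of _ "None # joinsep ws"]) auto
    next
      case (Suc k')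
      then have "k' < length ws" using Cons.prems by simp
      then obtain u v where uv: "joinsep ws = u @ map Some (ws ! k') @ v"
        "count_list u None = k'" "u = [] \<or> last u = None" "v = [] \<or> hd v = None"
        using Cons.IH[of k'] \<open>ws = w' # ws'\<close> by auto
      show ?thesis
        apply (rule exI[of _ "map Some w @ None # u"], rule exI[of _ v])
        using uv Suc \<open>ws = w' # ws'\<close> by (auto simp: count_list_0_iff)
    qed
  qed
qed

lemma count_join: "ws \<noteq> [] \<Longrightarrow> count_list (joinsep ws) None = length ws - 1"
proof (induction ws rule: joinsep.induct)
  case (3 w v vs)
  then show ?case by (simp add: count_list_0_iff)
qed (auto simp: count_list_0_iff)

fun splitsep :: "'a option list \<Rightarrow> 'a list list" where
  "splitsep [] = [[]]"
| "splitsep (None # xs) = [] # splitsep xs"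
| "splitsep (Some a # xs) = (case splitsep xs of [] \<Rightarrow> [[a]] | b # bs \<Rightarrow> (a # b) # bs)"

lemma splitsep_ne: "splitsep xs \<noteq> []"
  by (induction xs rule: splitsep.induct) (auto split: list.splits)

lemma joinsep_hd: "joinsep ((a # b) # bs) = Some a # joinsep (b # bs)"
  by (cases bs) auto

lemma split_join: "joinsep (splitsep xs) = xs \<and> length (splitsep xs) = count_list xs None + 1"
proof (induction xs rule: splitsep.induct)
  case 1 then show ?case by simp
next
  case (2 xs)
  then show ?case using splitsep_ne[of xs] by (cases "splitsep xs") auto
next
  case (3 a xs)
  then show ?case using splitsep_ne[of xs] by (cases "splitsep xs") (auto simp: joinsep_hd)
qed

lemma sat_foldr: "sat w i (foldr Conj xs (Cmp [] Eq 0)) \<longleftrightarrow> (\<forall>x\<in>set xs. sat w i x)"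
  by (induction xs) auto

lemma count_all: "sat w (length w) (Cmp [(1, Count (Sym None))] Eq c) \<longleftrightarrow> int (count_list w None) = c"
  using count_sym[of "length w" w None] by (simp only: cmp1 tval.simps) simp

lemma block_ok:
  assumes "ws \<noteq> []" "k < length ws" "regulated f"
  shows "sat (joinsep ws) (length (joinsep ws)) (tr k f) \<longleftrightarrow> ws ! k \<in> lang f"
proof -
  obtain u v where uv: "joinsep ws = u @ map Some (ws ! k) @ v"
     "count_list u None = k" "u = [] \<or> last u = None" "v = [] \<or> hd v = None"
    using decomp[OF assms(1,2)] by blast
  have "min (length (joinsep ws) - length u) (length (ws ! k)) = length (ws ! k)"
    using uv(1) by simp
  then show ?thesis
    using tr_correct(1)[OF uv, of f] assms(3) by (auto simp: lang_def)
qed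

theorem lemma3p5:
  fixes Ls :: "('a::finite) list set list"
  assumes "Ls \<noteq> []"
    and "\<forall>L \<in> set Ls. \<exists>f. regulated f \<and> L = lang f"
  shows "\<exists>g :: 'a option crasp. sepconcat Ls = lang g"
proof -
  define N where "N = length Ls"
  define fs where "fs = map (\<lambda>L. SOME f. regulated f \<and> L = lang f) Ls"
  have fs: "regulated (fs ! k) \<and> Ls ! k = lang (fs ! k)" if "k < N" for k
  proof -
    have "Ls ! k \<in> set Ls" using that N_def by simp
    then have "\<exists>f. regulated f \<and> Ls ! k = lang f" using assms(2) by blast
    then have "regulated (SOME f. regulated f \<and> Ls ! k = lang f) \<and> Ls ! k = lang (SOME f. regulated f \<and> Ls ! k = lang f)"
      by (rule someI_ex)
    then show ?thesis unfolding fs_def using that N_def by simp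
  qed
  have N: "N \<ge> 1" using assms(1) N_def by (cases Ls) auto
  define g :: "'a option crasp" where "g = Conj (Cmp [(1, Count (Sym None))] Eq (int (N - 1)))
     (foldr Conj (map (\<lambda>k. tr k (fs ! k)) [0..<N]) (Cmp [] Eq 0))"
  have "sepconcat Ls = lang g"
  proof (rule set_eqI, rule iffI)
    fix x assume "x \<in> sepconcat Ls"
    then obtain ws where ws: "x = joinsep ws" "length ws = N" "\<forall>i<N. ws ! i \<in> Ls ! i"
      unfolding sepconcat_def N_def by auto
    have ne: "ws \<noteq> []" using ws N by auto
    have c: "int (count_list x None) = int (N - 1)" using count_join[OF ne] ws by simp
    have b: "sat x (length x) (tr k (fs ! k))" if "k < N" for k
      using block_ok[OF ne, of k "fs ! k"] fs[OF that] ws that by auto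
    show "x \<in> lang g" unfolding g_def lang_def
      using c b by (simp only: mem_Collect_eq sat.simps(5) count_all sat_foldr) auto
  next
    fix x assume "x \<in> lang g"
    then have c: "int (count_list x None) = int (N - 1)" and
      b: "\<And>k. k < N \<Longrightarrow> sat x (length x) (tr k (fs ! k))"
      unfolding g_def lang_def by (simp_all only: mem_Collect_eq sat.simps(5) count_all sat_foldr) auto
    define ws where "ws = splitsep x"
    have j: "joinsep ws = x" and l: "length ws = N" using split_join[of x] c N unfolding ws_def by auto
    have ne: "ws \<noteq> []" using l N by auto
    have "ws ! k \<in> Ls ! k" if "k < N" for k
      using block_ok[OF ne, of k "fs ! k"] b[OF that] fs[OF that] j l that by auto
    then show "x \<in> sepconcat Ls" unfolding sepconcat_def using j l N_def by auto
  qed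
  then show ?thesis by blast
qed

end
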